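(* Let $G,H$ be finite simple graphs, $x\in V(G)$, $y\in V(H)$. Then the graph $\big(S(x)*B(y)\big)\cup\big(B(x)*S(y)\big)$ (that is, the unit sphere $S_{G*H}(x,y)$) is homotopic to the join $S(x)\oplus S(y)$: the clique complexes of the two graphs are homotopy equivalent. In particular $\chi(S_{G*H}(x,y))=\chi(S(x)\oplus S(y))$.
   Context: All graphs are finite simple graphs. For a vertex $x$ of $G$, $S(x)$ is the subgraph induced on the vertices adjacent to $x$, and $B(x)$ is the subgraph induced on $V(S(x))\cup\{x\}$. The strong product $G*H$ has vertex set $V(G)\times V(H)$, two distinct vertices $(a,b),(c,d)$ being adjacent iff ($a=c$ or $a\sim c$ in $G$) and ($b=d$ or $b\sim d$ in $H$); for induced subgraphs $A\subseteq G$, $C\subseteq H$, $A*C$ is the subgraph of $G*H$ induced on $V(A)\times V(C)$, and a union of such subgraphs means the subgraph induced on the union of vertex sets. The (Zykov) join $A\oplus C$ of two graphs is their disjoint union together with all edges between a vertex of $A$ and a vertex of $C$. The clique (Whitney) complex of a graph is the simplicial complex of its vertex sets of complete subgraphs. The Euler characteristic is $\chi(G)=\sum_{k\ge0}(-1)^k f_k(G)$, where $f_k(G)$ is the number of complete subgraphs with $k+1$ vertices ($\chi$ of the empty graph is $0$). *)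

theory Defs
  imports "HOL-Analysis.Analysis"
begin

type_synonym 'a graph = "'a set \<times> ('a \<Rightarrow> 'a \<Rightarrow> bool)"

definition verts :: "'a graph \<Rightarrow> 'a set" where "verts G = fst G"
definition adj :: "'a graph \<Rightarrow> 'a \<Rightarrow> 'a \<Rightarrow> bool" where "adj G = snd G"

definition fin_simple_graph :: "'a graph \<Rightarrow> bool" where
  "fin_simple_graph G \<longleftrightarrow> finite (verts G)
     \<and> (\<forall>x y. adj G x y \<longrightarrow> x \<in> verts G \<and> y \<in> verts G)
     \<and> (\<forall>x. \<not> adj G x x)
     \<and> (\<forall>x y. adj G x y \<longrightarrow> adj G y x)"

definition induced :: "'a graph \<Rightarrow> 'a set \<Rightarrow> 'a graph" where
  "induced G U = (verts G \<inter> U, \<lambda>x y. adj G x y \<and> x \<in> U \<and> y \<in> U)"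

definition usphere :: "'a graph \<Rightarrow> 'a \<Rightarrow> 'a graph" where
  "usphere G x = induced G {y \<in> verts G. adj G x y}"

definition uball :: "'a graph \<Rightarrow> 'a \<Rightarrow> 'a graph" where
  "uball G x = induced G ({y \<in> verts G. adj G x y} \<union> {x})"

definition strong_prod :: "'a graph \<Rightarrow> 'b graph \<Rightarrow> ('a \<times> 'b) graph" where
  "strong_prod G H = (verts G \<times> verts H,
     \<lambda>(a,b) (c,d). (a,b) \<noteq> (c,d) \<and> (a,b) \<in> verts G \<times> verts H \<and> (c,d) \<in> verts G \<times> verts H
        \<and> (a = c \<or> adj G a c) \<and> (b = d \<or> adj H b d))"

definition zjoin :: "'a graph \<Rightarrow> 'b graph \<Rightarrow> ('a + 'b) graph" where
  "zjoin A C = (Inl ` verts A \<union> Inr ` verts C,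
     \<lambda>u v. case (u, v) of
        (Inl a, Inl b) \<Rightarrow> adj A a b
      | (Inr a, Inr b) \<Rightarrow> adj C a b
      | (Inl a, Inr b) \<Rightarrow> a \<in> verts A \<and> b \<in> verts C
      | (Inr a, Inl b) \<Rightarrow> a \<in> verts C \<and> b \<in> verts A)"

definition cliques :: "'a graph \<Rightarrow> 'a set set" where
  "cliques G = {s. s \<subseteq> verts G \<and> s \<noteq> {} \<and> (\<forall>a\<in>s. \<forall>b\<in>s. a \<noteq> b \<longrightarrow> adj G a b)}"

definition euler_char :: "'a graph \<Rightarrow> int" where
  "euler_char G = (\<Sum>s\<in>cliques G. (-1) ^ (card s - 1))"

text \<open>Geometric realization of the clique complex: barycentric-coordinate functions
  whose support is a simplex, as a subspace of the product space 'a => real.\<close>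
definition realization :: "'a graph \<Rightarrow> ('a \<Rightarrow> real) set" where
  "realization G = {f. (\<forall>v. 0 \<le> f v) \<and> {v. f v \<noteq> 0} \<in> cliques G
                        \<and> sum f {v. f v \<noteq> 0} = 1}"

definition clique_complex_homotopy_equivalent :: "'a graph \<Rightarrow> 'b graph \<Rightarrow> bool" where
  "clique_complex_homotopy_equivalent G H \<longleftrightarrow>
     top_of_set (realization G) homotopy_equivalent_space top_of_set (realization H)"

end

theory Submission
  imports Defs
begin

definition lin :: "'u graph \<Rightarrow> ('u \<Rightarrow> 'v) \<Rightarrow> ('u \<Rightarrow> real) \<Rightarrow> ('v \<Rightarrow> real)" where
  "lin K p f = (\<lambda>w. \<Sum>v\<in>verts K. if p v = w then f v else 0)"

lemma realization_iff: "f \<in> realization K \<longleftrightarrow> (\<forall>v. 0 \<le> f v) \<and> {v. f v \<noteq> 0} \<in> cliques K \<and> sum f {v. f v \<noteq> 0} = 1"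
  by (simp add: realization_def)

lemma cliques_iff: "s \<in> cliques K \<longleftrightarrow> s \<subseteq> verts K \<and> s \<noteq> {} \<and> (\<forall>a\<in>s. \<forall>b\<in>s. a \<noteq> b \<longrightarrow> adj K a b)"
  by (simp add: cliques_def)

lemma cliques_subset: "\<tau> \<in> cliques K \<Longrightarrow> \<sigma> \<subseteq> \<tau> \<Longrightarrow> \<sigma> \<noteq> {} \<Longrightarrow> \<sigma> \<in> cliques K"
  unfolding cliques_iff by auto

lemma real_supp: "f \<in> realization K \<Longrightarrow> {v. f v \<noteq> 0} \<in> cliques K"
  unfolding realization_iff by blast

lemma real_supp_verts: "f \<in> realization K \<Longrightarrow> f v \<noteq> 0 \<Longrightarrow> v \<in> verts K"
  using real_supp[of f K] unfolding cliques_iff by auto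

lemma real_nonneg: "f \<in> realization K \<Longrightarrow> 0 \<le> f v"
  unfolding realization_iff by blast

lemma realization_memI:
  assumes "finite (verts K)" "\<And>v. 0 \<le> g v" "{v. g v \<noteq> 0} \<subseteq> \<tau>" "\<tau> \<in> cliques K" "sum g \<tau> = 1"
  shows "g \<in> realization K"
proof -
  have fin: "finite \<tau>" using assms(1,4) unfolding cliques_iff by (auto intro: finite_subset)
  have s: "sum g {v. g v \<noteq> 0} = sum g \<tau>"
    by (rule sum.mono_neutral_left[OF fin assms(3)]) auto
  have ne: "{v. g v \<noteq> 0} \<noteq> {}" by (metis s assms(5) sum.empty zero_neq_one)
  have c: "{v. g v \<noteq> 0} \<in> cliques K" using cliques_subset[OF assms(4) assms(3) ne] .
  have "sum g {v. g v \<noteq> 0} = 1" using s assms(5) by simp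
  then show ?thesis unfolding realization_iff using assms(2) c by simp
qed

lemma real_sum_verts:
  assumes "finite (verts K)" "f \<in> realization K"
  shows "sum f (verts K) = 1"
proof -
  have "sum f {v. f v \<noteq> 0} = 1" using assms(2) unfolding realization_iff by blast
  moreover have "sum f {v. f v \<noteq> 0} = sum f (verts K)"
    by (rule sum.mono_neutral_left[OF assms(1)]) (auto dest: real_supp_verts[OF assms(2)])
  ultimately show ?thesis by simp
qed

lemma sum_delta_swap: "finite T \<Longrightarrow> (\<Sum>v\<in>V. \<Sum>w\<in>T. if p v = w then (f v::real) else 0) = (\<Sum>v\<in>V. if p v \<in> T then f v else 0)"
   by (rule sum.cong[OF refl]) (rule sum.delta')

lemma sum_if_cover: "p ` {v. f v \<noteq> 0} \<subseteq> T \<Longrightarrow> (\<Sum>v\<in>V. if p v \<in> T then (f v::real) else 0) = (\<Sum>v\<in>V. f v)"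
   by (rule sum.cong[OF refl]) auto

lemma lin_sum:
  assumes "finite (verts K)" "f \<in> realization K" "finite T" "p ` {v. f v \<noteq> 0} \<subseteq> T"
  shows "sum (lin K p f) T = 1"
proof -
  have "sum (lin K p f) T = (\<Sum>v\<in>verts K. \<Sum>w\<in>T. if p v = w then f v else 0)"
    unfolding lin_def by (rule sum.swap)
  also have "\<dots> = (\<Sum>v\<in>verts K. if p v \<in> T then f v else 0)"
    using assms(3) by (rule sum_delta_swap)
  also have "\<dots> = (\<Sum>v\<in>verts K. f v)"
    using assms(4) by (rule sum_if_cover)
  also have "\<dots> = 1" using real_sum_verts[OF assms(1,2)] .
  finally show ?thesis .
qed

lemma lin_nonneg: "f \<in> realization K \<Longrightarrow> 0 \<le> lin K p f w"
  unfolding lin_def by (rule sum_nonneg) (simp add: real_nonneg)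

lemma lin_supp: "{w. lin K p f w \<noteq> 0} \<subseteq> p ` {v. f v \<noteq> 0}"
proof
  fix w assume "w \<in> {w. lin K p f w \<noteq> 0}"
  then obtain v where "v \<in> verts K" "(if p v = w then f v else 0) \<noteq> 0"
    unfolding lin_def using sum.neutral[of "verts K" "\<lambda>v. if p v = w then f v else 0"] by blast
  then show "w \<in> p ` {v. f v \<noteq> 0}" by (auto split: if_splits)
qed

lemma cont_coord: "continuous_map euclidean euclideanreal (\<lambda>f::'u\<Rightarrow>real. f v)"
  using continuous_map_product_projection[of v UNIV "\<lambda>i. euclideanreal"]
  by (simp add: euclidean_product_topology)

lemma cont_into_fun:
  assumes "\<And>w. continuous_map X euclideanreal (\<lambda>z. F z w)"
  shows "continuous_map X (euclidean :: ('v \<Rightarrow> real) topology) F"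
  using assms unfolding euclidean_product_topology[symmetric]
  by (simp add: continuous_map_componentwise_UNIV)

lemma cont_lin: "finite (verts K) \<Longrightarrow> continuous_map X euclidean g \<Longrightarrow> continuous_map X euclideanreal (\<lambda>z. lin K p (g z) w)"
  unfolding lin_def
  apply (rule continuous_map_sum, assumption)
  subgoal for v
    using continuous_map_compose[OF _ cont_coord[of v], of X g]
    by (cases "p v = w") (simp_all add: o_def)
  done


lemma cliques_finite: "finite (verts K) \<Longrightarrow> \<sigma> \<in> cliques K \<Longrightarrow> finite \<sigma>"
  unfolding cliques_iff by (auto intro: finite_subset)

lemma contig_in_real:
  assumes fK: "finite (verts K)" and fL: "finite (verts L)"
    and c: "\<forall>\<sigma>\<in>cliques K. p ` \<sigma> \<union> p' ` \<sigma> \<in> cliques L"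
    and f: "f \<in> realization K" and t: "0 \<le> t" "t \<le> 1"
  shows "(\<lambda>w. (1 - t) * lin K p f w + t * lin K p' f w) \<in> realization L"
proof -
  define \<tau> where "\<tau> = p ` {v. f v \<noteq> 0} \<union> p' ` {v. f v \<noteq> 0}"
  have tc: "\<tau> \<in> cliques L" unfolding \<tau>_def using c real_supp[OF f] by blast
  have ft: "finite \<tau>" using cliques_finite[OF fL tc] .
  have s1: "sum (lin K p f) \<tau> = 1" by (rule lin_sum[OF fK f ft]) (auto simp: \<tau>_def)
  have s2: "sum (lin K p' f) \<tau> = 1" by (rule lin_sum[OF fK f ft]) (auto simp: \<tau>_def)
  show ?thesis
  proof (rule realization_memI[OF fL _ _ tc])
    fix v show "0 \<le> (1 - t) * lin K p f v + t * lin K p' f v"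
      using lin_nonneg[OF f, of p v] lin_nonneg[OF f, of p' v] t by simp
  next
    show "{v. (1 - t) * lin K p f v + t * lin K p' f v \<noteq> 0} \<subseteq> \<tau>"
    proof
      fix w assume "w \<in> {v. (1 - t) * lin K p f v + t * lin K p' f v \<noteq> 0}"
      then have "lin K p f w \<noteq> 0 \<or> lin K p' f w \<noteq> 0" by auto
      then show "w \<in> \<tau>" using lin_supp[of K p f] lin_supp[of K p' f] unfolding \<tau>_def by blast
    qed
  next
    have "(\<Sum>w\<in>\<tau>. (1 - t) * lin K p f w + t * lin K p' f w) = (1 - t) * sum (lin K p f) \<tau> + t * sum (lin K p' f) \<tau>"
      by (simp add: sum.distrib sum_distrib_left)
    then show "(\<Sum>w\<in>\<tau>. (1 - t) * lin K p f w + t * lin K p' f w) = 1" using s1 s2 by simp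
  qed
qed

lemma contig_homotopic:
  assumes fK: "finite (verts K)" and fL: "finite (verts L)"
    and c: "\<forall>\<sigma>\<in>cliques K. p ` \<sigma> \<union> p' ` \<sigma> \<in> cliques L"
  shows "homotopic_with (\<lambda>_. True) (top_of_set (realization K)) (top_of_set (realization L)) (lin K p) (lin K p')"
  unfolding homotopic_with_def
proof (intro exI conjI allI ballI)
  let ?Z = "prod_topology (top_of_set {0..1::real}) (top_of_set (realization K))"
  let ?h = "\<lambda>z w. (1 - fst z) * lin K p (snd z) w + fst z * lin K p' (snd z) w"
  have cf: "continuous_map ?Z euclideanreal fst"
    using continuous_map_fst[of "top_of_set {0..1::real}" "top_of_set (realization K)"]
    by (simp add: continuous_map_in_subtopology)
  have cs: "continuous_map ?Z euclidean snd"
    using continuous_map_snd[of "top_of_set {0..1::real}" "top_of_set (realization K)"]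
    by (simp add: continuous_map_in_subtopology)
  have "continuous_map ?Z euclidean ?h"
  proof (rule cont_into_fun)
    fix w
    show "continuous_map ?Z euclideanreal (\<lambda>z. ?h z w)"
      by (intro continuous_map_add continuous_map_real_mult continuous_map_diff cf
          cont_lin[OF fK cs]) simp
  qed
  moreover have "?h ` topspace ?Z \<subseteq> realization L"
    using contig_in_real[OF fK fL c] by auto
  ultimately show "continuous_map ?Z (top_of_set (realization L)) ?h"
    by (simp add: continuous_map_in_subtopology image_subset_iff_funcset)
qed (auto)


lemma if_sum_zero: "(if c then sum g A else (0::real)) = sum (\<lambda>v. if c then g v else 0) A"
  by (cases c) simp_all

lemma swap_helper:
  assumes "finite B"
  shows "(\<Sum>w\<in>B. if q w = u then (\<Sum>v\<in>A. if p v = w then f v else 0) else (0::real))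
       = (\<Sum>v\<in>A. if p v \<in> B then (if q (p v) = u then f v else 0) else 0)"
proof -
  have "(\<Sum>w\<in>B. if q w = u then (\<Sum>v\<in>A. if p v = w then f v else 0) else (0::real))
      = (\<Sum>w\<in>B. \<Sum>v\<in>A. if p v = w then (if q w = u then f v else 0) else 0)"
  proof (rule sum.cong[OF refl])
    fix w show "(if q w = u then (\<Sum>v\<in>A. if p v = w then f v else 0) else (0::real))
      = (\<Sum>v\<in>A. if p v = w then (if q w = u then f v else 0) else 0)"
      by (cases "q w = u") (auto intro!: sum.cong sum.neutral)
  qed
  also have "\<dots> = (\<Sum>v\<in>A. \<Sum>w\<in>B. if p v = w then (if q w = u then f v else 0) else 0)"
    by (rule sum.swap)
  also have "\<dots> = (\<Sum>v\<in>A. if p v \<in> B then (if q (p v) = u then f v else 0) else 0)"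
  proof (rule sum.cong[OF refl])
    fix v show "(\<Sum>w\<in>B. if p v = w then (if q w = u then f v else 0) else 0)
       = (if p v \<in> B then (if q (p v) = u then f v else 0) else (0::real))"
      using sum.delta'[OF assms, of "p v" "\<lambda>w. if q w = u then f v else 0"] by simp
  qed
  finally show ?thesis .
qed

lemma lin_comp:
  assumes fK: "finite (verts K)" and fL: "finite (verts L)" and pV: "p ` verts K \<subseteq> verts L"
  shows "lin L q (lin K p f) = lin K (q \<circ> p) f"
proof
  fix u
  have "lin L q (lin K p f) u = (\<Sum>v\<in>verts K. if p v \<in> verts L then (if q (p v) = u then f v else 0) else 0)"
    unfolding lin_def by (rule swap_helper[OF fL])
  also have "\<dots> = lin K (q \<circ> p) f u"
    unfolding lin_def using pV by (intro sum.cong refl) auto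
  finally show "lin L q (lin K p f) u = lin K (q \<circ> p) f u" .
qed

lemma lin_id:
  assumes fK: "finite (verts K)" and f: "f \<in> realization K"
  shows "lin K id f = f"
proof
  fix u
  have "lin K id f u = (if u \<in> verts K then f u else 0)"
    unfolding lin_def id_def by (rule sum.delta[OF fK])
  then show "lin K id f u = f u" proof (cases "u \<in> verts K")
    case False
    then have "f u = 0" using real_supp_verts[OF f, of u] by blast
    then show ?thesis using \<open>lin K id f u = (if u \<in> verts K then f u else 0)\<close> False by simp
  qed (simp)
qed

lemma singleton_clique: "v \<in> verts K \<Longrightarrow> {v} \<in> cliques K"
  unfolding cliques_iff by auto

lemma simplicial_heq:
  assumes fK: "finite (verts K)" and fL: "finite (verts L)"
    and pc: "\<forall>\<sigma>\<in>cliques K. p ` \<sigma> \<in> cliques L"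
    and qc: "\<forall>\<tau>\<in>cliques L. q ` \<tau> \<in> cliques K"
    and c1: "\<forall>\<sigma>\<in>cliques K. (q \<circ> p) ` \<sigma> \<union> id ` \<sigma> \<in> cliques K"
    and c2: "\<forall>\<tau>\<in>cliques L. (p \<circ> q) ` \<tau> \<union> id ` \<tau> \<in> cliques L"
  shows "top_of_set (realization K) homotopy_equivalent_space top_of_set (realization L)"
proof -
  have pV: "p ` verts K \<subseteq> verts L"
  proof
    fix w assume "w \<in> p ` verts K"
    then obtain v where v: "v \<in> verts K" "w = p v" by blast
    have "p ` {v} \<in> cliques L" using pc singleton_clique[OF v(1)] by blast
    then show "w \<in> verts L" using v(2) unfolding cliques_iff by simp
  qed
  have qV: "q ` verts L \<subseteq> verts K"
  proof
    fix w assume "w \<in> q ` verts L"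
    then obtain v where v: "v \<in> verts L" "w = q v" by blast
    have "q ` {v} \<in> cliques K" using qc singleton_clique[OF v(1)] by blast
    then show "w \<in> verts K" using v(2) unfolding cliques_iff by simp
  qed
  have hp: "homotopic_with (\<lambda>_. True) (top_of_set (realization K)) (top_of_set (realization L)) (lin K p) (lin K p)"
    by (rule contig_homotopic[OF fK fL]) (simp add: pc)
  have hq: "homotopic_with (\<lambda>_. True) (top_of_set (realization L)) (top_of_set (realization K)) (lin L q) (lin L q)"
    by (rule contig_homotopic[OF fL fK]) (simp add: qc)
  have h1: "homotopic_with (\<lambda>_. True) (top_of_set (realization K)) (top_of_set (realization K)) (lin K (q \<circ> p)) (lin K id)"
    by (rule contig_homotopic[OF fK fK c1])
  have h2: "homotopic_with (\<lambda>_. True) (top_of_set (realization L)) (top_of_set (realization L)) (lin L (p \<circ> q)) (lin L id)"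
    by (rule contig_homotopic[OF fL fL c2])
  show ?thesis
    unfolding homotopy_equivalent_space_def
  proof (intro exI conjI)
    show "continuous_map (top_of_set (realization K)) (top_of_set (realization L)) (lin K p)"
      using homotopic_with_imp_continuous_maps[OF hp] by blast
    show "continuous_map (top_of_set (realization L)) (top_of_set (realization K)) (lin L q)"
      using homotopic_with_imp_continuous_maps[OF hq] by blast
    show "homotopic_with (\<lambda>x. True) (top_of_set (realization K)) (top_of_set (realization K)) (lin L q \<circ> lin K p) id"
    proof (rule homotopic_with_eq[OF h1])
      fix f show "(lin L q \<circ> lin K p) f = lin K (q \<circ> p) f"
        using lin_comp[OF fK fL pV] by simp
    next
      fix f assume "f \<in> topspace (top_of_set (realization K))"
      then show "id f = lin K id f" using lin_id[OF fK] by simp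
    qed simp
    show "homotopic_with (\<lambda>x. True) (top_of_set (realization L)) (top_of_set (realization L)) (lin K p \<circ> lin L q) id"
    proof (rule homotopic_with_eq[OF h2])
      fix f show "(lin K p \<circ> lin L q) f = lin L (p \<circ> q) f"
        using lin_comp[OF fL fK qV] by simp
    next
      fix f assume "f \<in> topspace (top_of_set (realization L))"
      then show "id f = lin L id f" using lin_id[OF fL] by simp
    qed simp
  qed
qed


locale twograph =
  fixes G :: "'a graph" and H :: "'b graph" and x :: 'a and y :: 'b
  assumes sG: "fin_simple_graph G" and sH: "fin_simple_graph H"
    and xG: "x \<in> verts G" and yH: "y \<in> verts H"
begin

definition "A = {a \<in> verts G. adj G x a}"
definition "B = {b \<in> verts H. adj H y b}"
definition "U = A \<times> insert y B \<union> insert x A \<times> B"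
definition "SS = induced (strong_prod G H)
             (verts (usphere G x) \<times> verts (uball H y) \<union> verts (uball G x) \<times> verts (usphere H y))"
definition "J = zjoin (usphere G x) (usphere H y)"
definition "pp = (\<lambda>z::'a\<times>'b. if fst z = x then Inr (snd z) else (Inl (fst z) :: 'a + 'b))"
definition "qq = (\<lambda>z::'a + 'b. case z of Inl a \<Rightarrow> (a, y) | Inr b \<Rightarrow> (x, b))"

lemma finG: "finite (verts G)" and adjG: "adj G u v \<Longrightarrow> u \<in> verts G \<and> v \<in> verts G"
  and irrG: "\<not> adj G u u" and symG: "adj G u v \<Longrightarrow> adj G v u"
  using sG unfolding fin_simple_graph_def by blast+

lemma finH: "finite (verts H)" and adjH: "adj H u v \<Longrightarrow> u \<in> verts H \<and> v \<in> verts H"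
  and irrH: "\<not> adj H u u" and symH: "adj H u v \<Longrightarrow> adj H v u"
  using sH unfolding fin_simple_graph_def by blast+

lemma xA: "x \<notin> A" and yB: "y \<notin> B" unfolding A_def B_def using irrG irrH by auto

lemma A_adj: "a \<in> A \<Longrightarrow> adj G a x \<and> adj G x a \<and> a \<in> verts G" unfolding A_def using symG by auto
lemma B_adj: "b \<in> B \<Longrightarrow> adj H b y \<and> adj H y b \<and> b \<in> verts H" unfolding B_def using symH by auto

lemma verts_sph: "verts (usphere G x) = A" "verts (usphere H y) = B"
  unfolding usphere_def induced_def verts_def A_def B_def by auto

lemma verts_ball: "verts (uball G x) = insert x A" "verts (uball H y) = insert y B"
  unfolding uball_def induced_def verts_def A_def B_def using xG yH by (auto simp: verts_def)

lemma adj_sph: "adj (usphere G x) a a' \<longleftrightarrow> adj G a a' \<and> a \<in> A \<and> a' \<in> A"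
  "adj (usphere H y) b b' \<longleftrightarrow> adj H b b' \<and> b \<in> B \<and> b' \<in> B"
  unfolding usphere_def induced_def adj_def A_def B_def by (auto simp: adj_def)

lemma U_sub: "U \<subseteq> verts G \<times> verts H"
  unfolding U_def using A_adj B_adj xG yH by auto

lemma verts_SS: "verts SS = U"
  unfolding SS_def verts_sph verts_ball U_def[symmetric] induced_def strong_prod_def
  using U_sub by (auto simp: verts_def)

lemma adj_SS: "adj SS (a,b) (c,d) \<longleftrightarrow> (a,b) \<in> U \<and> (c,d) \<in> U \<and> (a,b) \<noteq> (c,d)
     \<and> (a = c \<or> adj G a c) \<and> (b = d \<or> adj H b d)"
  unfolding SS_def verts_sph verts_ball U_def[symmetric] induced_def strong_prod_def
  using U_sub by (auto simp: adj_def)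

lemma verts_J: "verts J = Inl ` A \<union> Inr ` B"
  unfolding J_def zjoin_def verts_sph by (simp add: verts_def)

lemma adj_J: "adj J (Inl a) (Inl a') \<longleftrightarrow> adj G a a' \<and> a \<in> A \<and> a' \<in> A"
  "adj J (Inr b) (Inr b') \<longleftrightarrow> adj H b b' \<and> b \<in> B \<and> b' \<in> B"
  "adj J (Inl a) (Inr b) \<longleftrightarrow> a \<in> A \<and> b \<in> B"
  "adj J (Inr b) (Inl a) \<longleftrightarrow> a \<in> A \<and> b \<in> B"
  unfolding J_def zjoin_def by (auto simp add: adj_def[of "(_, _)"] adj_sph verts_sph)

lemma finU: "finite U" using U_sub finG finH by (meson finite_SigmaI finite_subset)
lemma fin_SS: "finite (verts SS)" using verts_SS finU by simp
lemma fin_J: "finite (verts J)" using verts_J finG finH unfolding A_def B_def by simp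

lemma cliques_SS: "\<sigma> \<in> cliques SS \<longleftrightarrow> \<sigma> \<subseteq> U \<and> \<sigma> \<noteq> {} \<and>
   (\<forall>a b c d. (a,b) \<in> \<sigma> \<longrightarrow> (c,d) \<in> \<sigma> \<longrightarrow> (a,b) \<noteq> (c,d) \<longrightarrow> (a = c \<or> adj G a c) \<and> (b = d \<or> adj H b d))"
  (is "?L \<longleftrightarrow> ?R")
proof
  assume L: ?L
  have s: "\<sigma> \<subseteq> U" and ne: "\<sigma> \<noteq> {}" using L unfolding cliques_iff verts_SS by auto
  have "(a = c \<or> adj G a c) \<and> (b = d \<or> adj H b d)"
    if "(a,b)\<in>\<sigma>" "(c,d)\<in>\<sigma>" "(a,b)\<noteq>(c,d)" for a b c d
  proof -
    have "adj SS (a,b) (c,d)" using L that unfolding cliques_iff by blast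
    then show ?thesis by (simp add: adj_SS)
  qed
  then show ?R using s ne by blast
next
  assume R: ?R
  show ?L unfolding cliques_iff verts_SS
  proof (intro conjI ballI impI)
    show "\<sigma> \<subseteq> U" "\<sigma> \<noteq> {}" using R by auto
    fix z w assume zw: "z \<in> \<sigma>" "w \<in> \<sigma>" "z \<noteq> w"
    obtain a b c d where e: "z = (a,b)" "w = (c,d)" by force
    have "(a = c \<or> adj G a c) \<and> (b = d \<or> adj H b d)" using R zw e by blast
    moreover have "(a,b) \<in> U" "(c,d) \<in> U" using R zw e by auto
    ultimately show "adj SS z w" using e zw(3) by (simp add: adj_SS)
  qed
qed

lemma cliques_J: "\<tau> \<in> cliques J \<longleftrightarrow> \<tau> \<subseteq> Inl ` A \<union> Inr ` B \<and> \<tau> \<noteq> {} \<and>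
   (\<forall>a a'. Inl a \<in> \<tau> \<longrightarrow> Inl a' \<in> \<tau> \<longrightarrow> a \<noteq> a' \<longrightarrow> adj G a a') \<and>
   (\<forall>b b'. Inr b \<in> \<tau> \<longrightarrow> Inr b' \<in> \<tau> \<longrightarrow> b \<noteq> b' \<longrightarrow> adj H b b')"
  (is "?L \<longleftrightarrow> ?R")
proof
  assume L: ?L
  have s: "\<tau> \<subseteq> Inl ` A \<union> Inr ` B" and ne: "\<tau> \<noteq> {}" using L unfolding cliques_iff verts_J by auto
  have "adj G a a'" if "Inl a \<in> \<tau>" "Inl a' \<in> \<tau>" "a \<noteq> a'" for a a'
  proof -
    have "adj J (Inl a) (Inl a')" using L that unfolding cliques_iff by blast
    then show ?thesis by (simp add: adj_J)
  qed
  moreover have "adj H b b'" if "Inr b \<in> \<tau>" "Inr b' \<in> \<tau>" "b \<noteq> b'" for b b'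
  proof -
    have "adj J (Inr b) (Inr b')" using L that unfolding cliques_iff by blast
    then show ?thesis by (simp add: adj_J)
  qed
  ultimately show ?R using s ne by blast
next
  assume R: ?R
  show ?L unfolding cliques_iff verts_J
  proof (intro conjI ballI impI)
    show "\<tau> \<subseteq> Inl ` A \<union> Inr ` B" "\<tau> \<noteq> {}" using R by auto
    fix z w assume zw: "z \<in> \<tau>" "w \<in> \<tau>" "z \<noteq> w"
    have zi: "z \<in> Inl ` A \<union> Inr ` B" "w \<in> Inl ` A \<union> Inr ` B" using R zw by auto
    show "adj J z w"
    proof (cases z)
      case (Inl a) note z = this
      show ?thesis
      proof (cases w)
        case (Inl a') then show ?thesis using z zw zi R by (auto simp: adj_J)
      next
        case (Inr b') then show ?thesis using z zw zi R by (auto simp: adj_J)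
      qed
    next
      case (Inr b) note z = this
      show ?thesis
      proof (cases w)
        case (Inl a') then show ?thesis using z zw zi R by (auto simp: adj_J)
      next
        case (Inr b') then show ?thesis using z zw zi R by (auto simp: adj_J)
      qed
    qed
  qed
qed

lemma U_cases: "(a,b) \<in> U \<Longrightarrow> (a \<in> A \<or> a = x) \<and> (b \<in> B \<or> b = y) \<and> \<not> (a = x \<and> b = y)"
  unfolding U_def using xA yB by auto

lemma pp_Inl: "pp z = Inl a \<longleftrightarrow> fst z \<noteq> x \<and> fst z = a"
  unfolding pp_def by auto
lemma pp_Inr: "pp z = Inr b \<longleftrightarrow> fst z = x \<and> snd z = b"
  unfolding pp_def by auto

lemma pc: "\<sigma> \<in> cliques SS \<Longrightarrow> pp ` \<sigma> \<in> cliques J"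
proof -
  assume "\<sigma> \<in> cliques SS"
  then have s: "\<sigma> \<subseteq> U" and ne: "\<sigma> \<noteq> {}" and
    cl0: "\<forall>a b c d. (a,b) \<in> \<sigma> \<longrightarrow> (c,d) \<in> \<sigma> \<longrightarrow> (a,b) \<noteq> (c,d) \<longrightarrow> (a = c \<or> adj G a c) \<and> (b = d \<or> adj H b d)"
    unfolding cliques_SS by simp_all
  have cl: "\<And>a b c d. (a,b) \<in> \<sigma> \<Longrightarrow> (c,d) \<in> \<sigma> \<Longrightarrow> (a,b) \<noteq> (c,d) \<Longrightarrow> (a = c \<or> adj G a c) \<and> (b = d \<or> adj H b d)"
    using cl0 by simp
  show ?thesis unfolding cliques_J
  proof (intro conjI allI impI)
    show "pp ` \<sigma> \<subseteq> Inl ` A \<union> Inr ` B"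
    proof
      fix w assume "w \<in> pp ` \<sigma>"
      then obtain a b where ab: "(a,b) \<in> \<sigma>" "w = pp (a,b)" by auto
      then have "(a,b) \<in> U" using s by auto
      then show "w \<in> Inl ` A \<union> Inr ` B" using ab(2) U_cases[of a b] unfolding pp_def by auto
    qed
    show "pp ` \<sigma> \<noteq> {}" using ne by simp
  next
    fix a a' assume h: "Inl a \<in> pp ` \<sigma>" "Inl a' \<in> pp ` \<sigma>" "a \<noteq> a'"
    from h(1) obtain b where b: "(a,b) \<in> \<sigma>" by (metis pp_Inl prod.collapse imageE)
    from h(2) obtain b' where b': "(a',b') \<in> \<sigma>" by (metis pp_Inl prod.collapse imageE)
    show "adj G a a'" using cl[OF b b'] h(3) by auto
  next
    fix c c' assume h: "Inr c \<in> pp ` \<sigma>" "Inr c' \<in> pp ` \<sigma>" "c \<noteq> c'"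
    from h(1) have b: "(x,c) \<in> \<sigma>" by (metis pp_Inr prod.collapse imageE)
    from h(2) have b': "(x,c') \<in> \<sigma>" by (metis pp_Inr prod.collapse imageE)
    show "adj H c c'" using cl[OF b b'] h(3) by auto
  qed
qed

lemma qc: "\<tau> \<in> cliques J \<Longrightarrow> qq ` \<tau> \<in> cliques SS"
proof -
  assume "\<tau> \<in> cliques J"
  then have s: "\<tau> \<subseteq> Inl ` A \<union> Inr ` B" and ne: "\<tau> \<noteq> {}" and
    c10: "\<forall>a a'. Inl a \<in> \<tau> \<longrightarrow> Inl a' \<in> \<tau> \<longrightarrow> a \<noteq> a' \<longrightarrow> adj G a a'" and
    c20: "\<forall>b b'. Inr b \<in> \<tau> \<longrightarrow> Inr b' \<in> \<tau> \<longrightarrow> b \<noteq> b' \<longrightarrow> adj H b b'"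
    unfolding cliques_J by simp_all
  have c1: "\<And>a a'. Inl a \<in> \<tau> \<Longrightarrow> Inl a' \<in> \<tau> \<Longrightarrow> a \<noteq> a' \<Longrightarrow> adj G a a'" using c10 by simp
  have c2: "\<And>b b'. Inr b \<in> \<tau> \<Longrightarrow> Inr b' \<in> \<tau> \<Longrightarrow> b \<noteq> b' \<Longrightarrow> adj H b b'" using c20 by simp
  show ?thesis unfolding cliques_SS
  proof (intro conjI; (intro allI impI)?)
    show "qq ` \<tau> \<subseteq> U" using s unfolding qq_def U_def by auto
    show "qq ` \<tau> \<noteq> {}" using ne by simp
  next
    fix a b c d assume h: "(a,b) \<in> qq ` \<tau>" "(c,d) \<in> qq ` \<tau>" "(a,b) \<noteq> (c,d)"
    from h(1) obtain z where z: "z \<in> \<tau>" "(a,b) = qq z" by auto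
    from h(2) obtain w where w: "w \<in> \<tau>" "(c,d) = qq w" by auto
    show "(a = c \<or> adj G a c) \<and> (b = d \<or> adj H b d)"
    proof (cases z)
      case (Inl a1) note zz = this
      then have a1: "a1 \<in> A" using z s by auto
      show ?thesis
      proof (cases w)
        case (Inl a2) then show ?thesis using zz z w h(3) c1 by (auto simp: qq_def)
      next
        case (Inr b2) then have "b2 \<in> B" using w s by auto
        then show ?thesis using Inr zz z w a1 A_adj B_adj by (auto simp: qq_def)
      qed
    next
      case (Inr b1) note zz = this
      then have b1: "b1 \<in> B" using z s by auto
      show ?thesis
      proof (cases w)
        case (Inl a2) then have "a2 \<in> A" using w s by auto
        then show ?thesis using Inl zz z w b1 A_adj B_adj by (auto simp: qq_def)
      next
        case (Inr b2) then show ?thesis using zz z w h(3) c2 by (auto simp: qq_def)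
      qed
    qed
  qed
qed

lemma ppqq: "z \<in> verts J \<Longrightarrow> pp (qq z) = z"
  unfolding verts_J pp_def qq_def using xA by auto

lemma c2: "\<tau> \<in> cliques J \<Longrightarrow> (pp \<circ> qq) ` \<tau> \<union> id ` \<tau> \<in> cliques J"
proof -
  assume t: "\<tau> \<in> cliques J"
  then have "\<tau> \<subseteq> verts J" unfolding cliques_iff by simp
  then have "(pp \<circ> qq) ` \<tau> = \<tau>" using ppqq by (force simp: image_iff)
  then show ?thesis using t by simp
qed

lemma c1: "\<sigma> \<in> cliques SS \<Longrightarrow> (qq \<circ> pp) ` \<sigma> \<union> id ` \<sigma> \<in> cliques SS"
proof -
  assume "\<sigma> \<in> cliques SS"
  then have s: "\<sigma> \<subseteq> U" and ne: "\<sigma> \<noteq> {}" and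
    cl0: "\<forall>a b c d. (a,b) \<in> \<sigma> \<longrightarrow> (c,d) \<in> \<sigma> \<longrightarrow> (a,b) \<noteq> (c,d) \<longrightarrow> (a = c \<or> adj G a c) \<and> (b = d \<or> adj H b d)"
    unfolding cliques_SS by simp_all
  have cl: "\<And>a b c d. (a,b) \<in> \<sigma> \<Longrightarrow> (c,d) \<in> \<sigma> \<Longrightarrow> (a,b) \<noteq> (c,d) \<Longrightarrow> (a = c \<or> adj G a c) \<and> (b = d \<or> adj H b d)"
    using cl0 by simp
  let ?T = "(qq \<circ> pp) ` \<sigma> \<union> id ` \<sigma>"
  have qp: "(qq \<circ> pp) (a,b) = (if a = x then (a,b) else (a,y))" for a b
    unfolding qq_def pp_def by simp
  have qp2: "qq (pp (a,b)) = (if a = x then (a,b) else (a,y))" for a b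
    unfolding qq_def pp_def by simp
  have T1: "\<exists>b'. (a,b') \<in> \<sigma>" if "(a,b) \<in> ?T" for a b
    using that by (auto simp: qp2 split: if_splits)
  have T2: "(a,b) \<in> \<sigma> \<or> b = y" if "(a,b) \<in> ?T" for a b
    using that by (auto simp: qp2 split: if_splits)
  have TU: "?T \<subseteq> U"
  proof
    fix z assume "z \<in> ?T"
    then obtain a b where ab: "(a,b) \<in> \<sigma>" "z = (qq \<circ> pp) (a,b) \<or> z = (a,b)" by (metis (no_types) Un_iff id_apply image_iff prod.collapse)
    have "(a,b) \<in> U" using ab s by auto
    then show "z \<in> U" using ab(2) U_cases[of a b] unfolding qp U_def by auto
  qed
  have UB: "b = y \<or> adj H y b" if "(a,b) \<in> U" for a b
    using that U_cases[of a b] B_adj by auto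
  show ?thesis unfolding cliques_SS
  proof (intro conjI; (intro allI impI)?)
    show "?T \<subseteq> U" by (rule TU)
    show "?T \<noteq> {}" using ne by simp
  next
    fix a b c d assume h: "(a,b) \<in> ?T" "(c,d) \<in> ?T" "(a,b) \<noteq> (c,d)"
    obtain b' where b': "(a,b') \<in> \<sigma>" using T1[OF h(1)] by blast
    obtain d' where d': "(c,d') \<in> \<sigma>" using T1[OF h(2)] by blast
    have g: "a = c \<or> adj G a c" using cl[OF b' d'] by (cases "a = c") auto
    have abU: "(a,b) \<in> U" "(c,d) \<in> U" using h TU by auto
    have "b = d \<or> adj H b d"
    proof (cases "(a,b) \<in> \<sigma> \<and> (c,d) \<in> \<sigma>")
      case True then show ?thesis using cl h(3) by blast
    next
      case False
      then have "b = y \<or> d = y" using T2[OF h(1)] T2[OF h(2)] by blast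
      then show ?thesis using UB[OF abU(1)] UB[OF abU(2)] symH by blast
    qed
    then show "(a = c \<or> adj G a c) \<and> (b = d \<or> adj H b d)" using g by blast
  qed
qed

lemma heq: "clique_complex_homotopy_equivalent SS J"
  unfolding clique_complex_homotopy_equivalent_def
  by (rule simplicial_heq[OF fin_SS fin_J]) (use pc qc c1 c2 in blast)+

lemma fin_cliques: "finite (verts K) \<Longrightarrow> finite (cliques K)"
  by (rule finite_subset[of _ "Pow (verts K)"]) (auto simp: cliques_iff)

definition "ee \<sigma> = (fst (SOME z. z \<in> \<sigma> \<inter> A \<times> B), y)"

lemma ee_in: "\<sigma> \<inter> A \<times> B \<noteq> {} \<Longrightarrow> \<exists>b. (fst (ee \<sigma>), b) \<in> \<sigma> \<inter> A \<times> B"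
  unfolding ee_def by (metis (no_types, lifting) all_not_in_conv fst_conv prod.collapse someI)

lemma ee_snd: "snd (ee \<sigma>) = y" unfolding ee_def by simp

lemma ee_notAB: "ee \<sigma> \<notin> A \<times> B" using yB unfolding ee_def by auto

lemma ee_cong: "\<sigma> \<inter> A \<times> B = \<sigma>' \<inter> A \<times> B \<Longrightarrow> ee \<sigma> = ee \<sigma>'"
  unfolding ee_def by simp

lemma diff_int: "e \<notin> X \<Longrightarrow> (S - {e}) \<inter> X = S \<inter> X" by auto
lemma insert_int: "e \<notin> X \<Longrightarrow> (insert e S) \<inter> X = S \<inter> X" by auto

lemma ee_remove: "ee (\<sigma> - {ee \<sigma>}) = ee \<sigma>"
  by (rule ee_cong) (rule diff_int[OF ee_notAB])

lemma ee_insert: "ee (insert (ee \<sigma>) \<sigma>) = ee \<sigma>"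
  by (rule ee_cong) (rule insert_int[OF ee_notAB])

lemma insert_ee_clique:
  assumes t: "\<tau> \<in> cliques SS" and ab: "\<tau> \<inter> A \<times> B \<noteq> {}"
  shows "insert (ee \<tau>) \<tau> \<in> cliques SS"
proof -
  from t have s: "\<tau> \<subseteq> U" and ne: "\<tau> \<noteq> {}" and
    cl0: "\<forall>a b c d. (a,b) \<in> \<tau> \<longrightarrow> (c,d) \<in> \<tau> \<longrightarrow> (a,b) \<noteq> (c,d) \<longrightarrow> (a = c \<or> adj G a c) \<and> (b = d \<or> adj H b d)"
    unfolding cliques_SS by simp_all
  have cl: "\<And>a b c d. (a,b) \<in> \<tau> \<Longrightarrow> (c,d) \<in> \<tau> \<Longrightarrow> (a,b) \<noteq> (c,d) \<Longrightarrow> (a = c \<or> adj G a c) \<and> (b = d \<or> adj H b d)"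
    using cl0 by simp
  obtain c b0 where cb: "(c,b0) \<in> \<tau>" "c \<in> A" "b0 \<in> B" "ee \<tau> = (c,y)"
    using ee_in[OF ab] ee_snd[of \<tau>] by (metis IntD1 IntD2 mem_Sigma_iff prod.collapse)
  have cU: "(c,y) \<in> U" using cb(2) unfolding U_def by auto
  have UB: "b = y \<or> adj H y b" if "(a,b) \<in> U" for a b
    using that U_cases[of a b] B_adj by auto
  have key: "(c = u \<or> adj G c u) \<and> (y = v \<or> adj H y v)" if "(u,v) \<in> \<tau>" for u v
  proof -
    have "c = u \<or> adj G c u" using cl[OF cb(1) that] by (cases "c = u") auto
    moreover have "y = v \<or> adj H y v" using UB[of u v] that s by auto
    ultimately show ?thesis by blast
  qed
  show ?thesis unfolding cliques_SS cb(4)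
  proof (intro conjI; (intro allI impI)?)
    show "insert (c, y) \<tau> \<subseteq> U" using s cU by simp
    show "insert (c, y) \<tau> \<noteq> {}" by simp
  next
    fix a b a' b' assume h: "(a,b) \<in> insert (c,y) \<tau>" "(a',b') \<in> insert (c,y) \<tau>" "(a,b) \<noteq> (a',b')"
    show "(a = a' \<or> adj G a a') \<and> (b = b' \<or> adj H b b')"
    proof (cases "(a,b) = (c,y)")
      case True
      then have "(a',b') \<in> \<tau>" using h by auto
      then show ?thesis using key True by auto
    next
      case False
      then have ab': "(a,b) \<in> \<tau>" using h by auto
      show ?thesis
      proof (cases "(a',b') = (c,y)")
        case True
        then show ?thesis using key[OF ab'] symG symH by auto
      next
        case False
        then have "(a',b') \<in> \<tau>" using h by auto
        then show ?thesis using cl[OF ab'] h(3) by blast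
      qed
    qed
  qed
qed

lemma sum_C1_zero:
  "(\<Sum>\<sigma>\<in>{\<sigma>\<in>cliques SS. \<sigma> \<inter> A \<times> B \<noteq> {}}. (-1::int) ^ (card \<sigma> - 1)) = 0"
proof -
  let ?C = "{\<sigma>\<in>cliques SS. \<sigma> \<inter> A \<times> B \<noteq> {}}"
  let ?Ca = "{\<sigma>\<in>?C. ee \<sigma> \<in> \<sigma>}"
  let ?Cb = "{\<sigma>\<in>?C. ee \<sigma> \<notin> \<sigma>}"
  let ?g = "\<lambda>\<sigma>. (-1::int) ^ (card \<sigma> - 1)"
  have finC: "finite ?C" using fin_cliques[OF fin_SS] by simp
  have finS: "finite \<sigma>" if "\<sigma> \<in> cliques SS" for \<sigma>
    using cliques_finite[OF fin_SS that] .
  have e: "?C = ?Ca \<union> ?Cb"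
  proof (rule set_eqI)
    fix z show "z \<in> ?C \<longleftrightarrow> z \<in> ?Ca \<union> ?Cb" by (cases "ee z \<in> z") simp_all
  qed
  have fa: "finite ?Ca" by (rule finite_subset[OF _ finC]) (rule subsetI, simp)
  have fb: "finite ?Cb" by (rule finite_subset[OF _ finC]) (rule subsetI, simp)
  have dj: "?Ca \<inter> ?Cb = {}" by (rule set_eqI) simp
  have "sum ?g ?C = sum ?g (?Ca \<union> ?Cb)" by (rule arg_cong[OF e])
  also have "\<dots> = sum ?g ?Ca + sum ?g ?Cb" by (rule sum.union_disjoint[OF fa fb dj])
  finally have split: "sum ?g ?C = sum ?g ?Ca + sum ?g ?Cb" .
  have bij: "bij_betw (\<lambda>\<sigma>. \<sigma> - {ee \<sigma>}) ?Ca ?Cb"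
  proof (rule bij_betw_byWitness[where f' = "\<lambda>\<tau>. insert (ee \<tau>) \<tau>"])
    show "\<forall>\<sigma>\<in>?Ca. insert (ee (\<sigma> - {ee \<sigma>})) (\<sigma> - {ee \<sigma>}) = \<sigma>"
    proof
      fix \<sigma> assume "\<sigma> \<in> ?Ca"
      then have "ee \<sigma> \<in> \<sigma>" by simp
      then show "insert (ee (\<sigma> - {ee \<sigma>})) (\<sigma> - {ee \<sigma>}) = \<sigma>"
        unfolding ee_remove by (rule insert_Diff)
    qed
    show "\<forall>\<tau>\<in>?Cb. insert (ee \<tau>) \<tau> - {ee (insert (ee \<tau>) \<tau>)} = \<tau>"
    proof
      fix \<tau> assume "\<tau> \<in> ?Cb"
      then have "ee \<tau> \<notin> \<tau>" by simp
      then show "insert (ee \<tau>) \<tau> - {ee (insert (ee \<tau>) \<tau>)} = \<tau>"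
        unfolding ee_insert by simp
    qed
    show "(\<lambda>\<sigma>. \<sigma> - {ee \<sigma>}) ` ?Ca \<subseteq> ?Cb"
    proof
      fix \<tau> assume "\<tau> \<in> (\<lambda>\<sigma>. \<sigma> - {ee \<sigma>}) ` ?Ca"
      then obtain \<sigma> where sg: "\<sigma> \<in> ?Ca" "\<tau> = \<sigma> - {ee \<sigma>}" by blast
      have i: "\<tau> \<inter> A \<times> B = \<sigma> \<inter> A \<times> B" using sg(2) diff_int[OF ee_notAB[of \<sigma>]] by simp
      have "\<tau> \<noteq> {}" using i sg(1) by auto
      then have "\<tau> \<in> cliques SS" using sg cliques_subset[of \<sigma> SS \<tau>] by auto
      moreover have "ee \<tau> \<notin> \<tau>" using sg(2) ee_remove[of \<sigma>] by simp
      ultimately show "\<tau> \<in> ?Cb" using i sg(1) by auto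
    qed
    show "(\<lambda>\<tau>. insert (ee \<tau>) \<tau>) ` ?Cb \<subseteq> ?Ca"
    proof
      fix \<sigma> assume "\<sigma> \<in> (\<lambda>\<tau>. insert (ee \<tau>) \<tau>) ` ?Cb"
      then obtain \<tau> where tg: "\<tau> \<in> ?Cb" "\<sigma> = insert (ee \<tau>) \<tau>" by blast
      have "\<sigma> \<in> cliques SS" using tg insert_ee_clique by auto
      moreover have "\<sigma> \<inter> A \<times> B \<noteq> {}" using tg insert_int[OF ee_notAB[of \<tau>]] by simp
      moreover have "ee \<sigma> \<in> \<sigma>" using tg(2) ee_insert[of \<tau>] by simp
      ultimately show "\<sigma> \<in> ?Ca" by auto
    qed
  qed
  have "sum ?g ?Ca = sum (\<lambda>\<sigma>. - ?g (\<sigma> - {ee \<sigma>})) ?Ca"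
  proof (rule sum.cong[OF refl])
    fix \<sigma> assume "\<sigma> \<in> ?Ca"
    then have f: "finite \<sigma>" and e: "ee \<sigma> \<in> \<sigma>" and ab: "\<sigma> \<inter> A \<times> B \<noteq> {}"
      using finS by auto
    have "\<sigma> - {ee \<sigma>} \<noteq> {}" using ab diff_int[OF ee_notAB[of \<sigma>]] by auto
    then have "card (\<sigma> - {ee \<sigma>}) > 0" using f by (simp add: card_gt_0_iff)
    then obtain j where j: "card (\<sigma> - {ee \<sigma>}) = Suc j" using gr0_implies_Suc by blast
    have "Suc (card (\<sigma> - {ee \<sigma>})) = card \<sigma>" by (rule card_Suc_Diff1[OF f e])
    then have "card \<sigma> = Suc (Suc j)" using j by simp
    then show "?g \<sigma> = - ?g (\<sigma> - {ee \<sigma>})" using j by simp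
  qed
  also have "\<dots> = - sum ?g ?Cb"
    using sum.reindex_bij_betw[OF bij, of ?g] by (simp add: sum_negf)
  finally show ?thesis using split by simp
qed

lemma qq_inj: "inj_on qq (verts J)"
  by (rule inj_on_inverseI[where g = pp]) (rule ppqq)

lemma sum_C0:
  "(\<Sum>\<sigma>\<in>{\<sigma>\<in>cliques SS. \<sigma> \<inter> A \<times> B = {}}. (-1::int) ^ (card \<sigma> - 1)) = euler_char J"
proof -
  let ?g = "\<lambda>\<sigma>. (-1::int) ^ (card \<sigma> - 1)"
  have bij: "bij_betw (\<lambda>\<tau>. qq ` \<tau>) (cliques J) {\<sigma>\<in>cliques SS. \<sigma> \<inter> A \<times> B = {}}"
  proof (rule bij_betw_byWitness[where f' = "\<lambda>\<sigma>. pp ` \<sigma>"])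
    show "\<forall>\<tau>\<in>cliques J. pp ` qq ` \<tau> = \<tau>"
    proof
      fix \<tau> assume "\<tau> \<in> cliques J"
      then have "\<tau> \<subseteq> verts J" unfolding cliques_iff by simp
      then show "pp ` qq ` \<tau> = \<tau>" using ppqq by (force simp: image_iff)
    qed
    show "\<forall>\<sigma>\<in>{\<sigma>\<in>cliques SS. \<sigma> \<inter> A \<times> B = {}}. qq ` pp ` \<sigma> = \<sigma>"
    proof
      fix \<sigma> assume "\<sigma> \<in> {\<sigma>\<in>cliques SS. \<sigma> \<inter> A \<times> B = {}}"
      then have s: "\<sigma> \<subseteq> U" and d: "\<sigma> \<inter> A \<times> B = {}" unfolding cliques_SS by auto
      have "qq (pp z) = z" if "z \<in> \<sigma>" for z
      proof -
        obtain a b where z: "z = (a,b)" by force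
        have "(a,b) \<in> U" "(a,b) \<notin> A \<times> B" using that s d z by auto
        then show ?thesis using z U_cases[of a b] unfolding pp_def qq_def by auto
      qed
      then show "qq ` pp ` \<sigma> = \<sigma>" by (force simp: image_iff)
    qed
    show "(\<lambda>\<tau>. qq ` \<tau>) ` cliques J \<subseteq> {\<sigma>\<in>cliques SS. \<sigma> \<inter> A \<times> B = {}}"
    proof
      fix \<sigma> assume "\<sigma> \<in> (\<lambda>\<tau>. qq ` \<tau>) ` cliques J"
      then obtain \<tau> where t: "\<tau> \<in> cliques J" "\<sigma> = qq ` \<tau>" by blast
      have n: "qq z \<notin> A \<times> B" for z using xA yB unfolding qq_def by (cases z) auto
      have "\<forall>w\<in>\<sigma>. w \<notin> A \<times> B" using t(2) n by auto
      then have "\<sigma> \<inter> A \<times> B = {}" by auto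
      then show "\<sigma> \<in> {\<sigma>\<in>cliques SS. \<sigma> \<inter> A \<times> B = {}}" using t qc by simp
    qed
    show "(\<lambda>\<sigma>. pp ` \<sigma>) ` {\<sigma>\<in>cliques SS. \<sigma> \<inter> A \<times> B = {}} \<subseteq> cliques J"
      using pc by auto
  qed
  have "sum ?g {\<sigma>\<in>cliques SS. \<sigma> \<inter> A \<times> B = {}} = sum (\<lambda>\<tau>. ?g (qq ` \<tau>)) (cliques J)"
    using sum.reindex_bij_betw[OF bij, of ?g] by simp
  also have "\<dots> = sum ?g (cliques J)"
  proof (rule sum.cong[OF refl])
    fix \<tau> assume "\<tau> \<in> cliques J"
    then have "\<tau> \<subseteq> verts J" unfolding cliques_iff by simp
    then have "inj_on qq \<tau>" using qq_inj inj_on_subset by blast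
    then show "?g (qq ` \<tau>) = ?g \<tau>" by (simp add: card_image)
  qed
  finally show ?thesis unfolding euler_char_def .
qed

lemma euler_eq: "euler_char SS = euler_char J"
proof -
  let ?g = "\<lambda>\<sigma>. (-1::int) ^ (card \<sigma> - 1)"
  have fin: "finite (cliques SS)" using fin_cliques[OF fin_SS] .
  let ?C0 = "{\<sigma>\<in>cliques SS. \<sigma> \<inter> A \<times> B = {}}"
  let ?C1 = "{\<sigma>\<in>cliques SS. \<sigma> \<inter> A \<times> B \<noteq> {}}"
  have e: "cliques SS = ?C0 \<union> ?C1"
  proof (rule set_eqI)
    fix z show "z \<in> cliques SS \<longleftrightarrow> z \<in> ?C0 \<union> ?C1" by (cases "z \<inter> A \<times> B = {}") simp_all
  qed
  have f0: "finite ?C0" by (rule finite_subset[OF _ fin]) (rule subsetI, simp)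
  have f1: "finite ?C1" by (rule finite_subset[OF _ fin]) (rule subsetI, simp)
  have dj: "?C0 \<inter> ?C1 = {}" by (rule set_eqI) simp
  have "euler_char SS = sum ?g (?C0 \<union> ?C1)" unfolding euler_char_def by (rule arg_cong[OF e])
  also have "\<dots> = sum ?g ?C0 + sum ?g ?C1" by (rule sum.union_disjoint[OF f0 f1 dj])
  finally have "euler_char SS = sum ?g ?C0 + sum ?g ?C1" .
  then show ?thesis using sum_C0 sum_C1_zero by simp
qed

lemma main: "clique_complex_homotopy_equivalent SS J \<and> euler_char SS = euler_char J"
  using heq euler_eq by blast

end
theorem mainTheorem3:
  fixes G :: "'a graph" and H :: "'b graph" and x :: 'a and y :: 'b
  assumes "fin_simple_graph G" and "fin_simple_graph H"
    and "x \<in> verts G" and "y \<in> verts H"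
  defines "S \<equiv> induced (strong_prod G H)
             (verts (usphere G x) \<times> verts (uball H y) \<union> verts (uball G x) \<times> verts (usphere H y))"
  shows "clique_complex_homotopy_equivalent S (zjoin (usphere G x) (usphere H y))
         \<and> euler_char S = euler_char (zjoin (usphere G x) (usphere H y))"
proof -
  interpret twograph G H x y using assms(1-4) by unfold_locales
  show ?thesis using main unfolding S_def SS_def J_def .
qed

end
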